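(* For every real $t>0$, $$\lim_{n \to \infty} \sum_{k=0}^{n} N_{0,n-k}(k+t) = \frac{2}{3}.$$
   Context: $N_{0,m}$ denotes the uniform B-spline of degree $m$ with knots $0,1,\ldots,m+1$ and support $[0,m+1]$: $N_{0,0}(t)=\chi_{[0,1]}(t)$ (the indicator of $[0,1]$) and $N_{0,m}(t)=\int_{t-1}^{t}N_{0,m-1}(x)\,dx$ for $m\ge1$; i.e. $N_{0,m}$ is the $(m+1)$-fold convolution of $\chi_{[0,1]}$ with itself. *)

theory Defs
  imports "HOL-Analysis.Analysis"
begin

text \<open>Uniform B-spline N_{0,m} of degree m with knots 0,1,...,m+1:
  N_{0,0} is the indicator of [0,1], and
  N_{0,m}(t) = integral over [t-1,t] of N_{0,m-1}.\<close>

fun bspline :: "nat \<Rightarrow> real \<Rightarrow> real" where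
  "bspline 0 t = indicator {0..1} t"
| "bspline (Suc m) t = integral {t - 1..t} (bspline m)"

end

theory Submission
  imports Defs
begin


definition LI :: "(real \<Rightarrow> real) \<Rightarrow> bool" where
  "LI f \<longleftrightarrow> (\<forall>a b. f integrable_on {a..b})"

lemma LI_D: "LI f \<Longrightarrow> f integrable_on {a..b}"
  by (simp add: LI_def)

lemma ind_isCont:
  assumes "LI f" "c < u"
  shows "isCont (\<lambda>v. integral {c..v} f) u"
proof -
  have "continuous_on {c..u+1} (\<lambda>v. integral {c..v} f)"
    by (rule indefinite_integral_continuous_1) (rule LI_D[OF assms(1)])
  moreover have "u \<in> interior {c..u+1}" using assms by simp
  ultimately show ?thesis by (rule continuous_on_interior)
qed

lemma win_split:
  assumes "LI f" "c \<le> x - d" "e \<le> d"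
  shows "integral {x-d..x-e} f = integral {c..x-e} f - integral {c..x-d} f"
proof -
  have "integral {c..x-d} f + integral {x-d..x-e} f = integral {c..x-e} f"
    using Henstock_Kurzweil_Integration.integral_combine[where a=c and c="x-d" and b="x-e" and f=f] assms by (auto intro: LI_D)
  then show ?thesis by simp
qed

lemma win_isCont:
  assumes "LI f" "e \<le> d"
  shows "isCont (\<lambda>x. integral {x-d..x-e} f) x0"
proof -
  define c where "c = x0 - d - 2"
  have ev: "eventually (\<lambda>x. integral {x-d..x-e} f = integral {c..x-e} f - integral {c..x-d} f) (nhds x0)"
    unfolding eventually_nhds
    apply (rule exI[of _ "{x0-1<..<x0+1}"])
    using assms by (auto simp: c_def intro!: win_split)
  have "isCont (\<lambda>x. integral {c..x-e} f - integral {c..x-d} f) x0"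
  proof (intro continuous_intros)
    show "isCont (\<lambda>x. integral {c..x-e} f) x0"
      by (rule isCont_o2[where f="\<lambda>x. x - e", OF _ ind_isCont[OF assms(1)]]) (use assms in \<open>auto simp: c_def\<close>)
    show "isCont (\<lambda>x. integral {c..x-d} f) x0"
      by (rule isCont_o2[where f="\<lambda>x. x - d", OF _ ind_isCont[OF assms(1)]]) (use assms in \<open>auto simp: c_def\<close>)
  qed
  then show ?thesis using isCont_cong[OF ev] by simp
qed

lemma isCont_LI:
  assumes "\<And>x. isCont f x" shows "LI f"
  unfolding LI_def
  by (intro allI integrable_continuous_real continuous_at_imp_continuous_on) (use assms in auto)

lemma bs_LI: "LI (bspline m)"
proof (induction m)
  case 0
  have "indicat_real {0..1} integrable_on {a..b}" for a b :: real
  proof -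
    have "{0..1::real} \<inter> {a..b} = {max 0 a..min 1 b}" by auto
    then show ?thesis by (simp add: integrable_on_indicator)
  qed
  then show ?case by (simp add: LI_def)
next
  case (Suc m)
  have e: "bspline (Suc m) = (\<lambda>x. integral {x-1..x} (bspline m))" by (rule ext) simp
  have "isCont (bspline (Suc m)) x" for x
    using win_isCont[OF Suc, of 0 1 x] unfolding e by simp
  then show ?case by (rule isCont_LI)
qed

lemma bs_isCont: "isCont (bspline (Suc m)) x"
proof -
  have e: "bspline (Suc m) = (\<lambda>x. integral {x-1..x} (bspline m))" by (rule ext) simp
  show ?thesis using win_isCont[OF bs_LI[of m], of 0 1 x] unfolding e by simp
qed

lemma bs_neg: "x < 0 \<Longrightarrow> bspline m x = 0"
proof (induction m arbitrary: x)
  case 0 then show ?case by simp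
next
  case (Suc m)
  have "integral {x-1..x} (bspline m) = integral {x-1..x} (\<lambda>_. 0)"
    by (rule integral_cong) (use Suc in auto)
  then show ?case by simp
qed

lemma bs_nonneg: "0 \<le> bspline m x"
proof (induction m arbitrary: x)
  case 0 then show ?case by simp
next
  case (Suc m)
  have "bspline m integrable_on {x-1..x}" by (rule LI_D[OF bs_LI])
  then have "0 \<le> integral {x-1..x} (bspline m)" by (rule integral_nonneg) (rule Suc)
  then show ?case by simp
qed



lemma pow_has_integral:
  fixes s :: real
  assumes "0 \<le> s"
  shows "((\<lambda>r. r ^ j / fact j) has_integral (s ^ Suc j / fact (Suc j))) {0..s}"
proof -
  have "((\<lambda>r::real. r ^ j / fact j) has_integral (s ^ Suc j / fact (Suc j) - 0 ^ Suc j / fact (Suc j))) {0..s}"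
  proof (rule fundamental_theorem_of_calculus)
    show "0 \<le> s" by fact
    fix x :: real assume "x \<in> {0..s}"
    have "((\<lambda>r::real. r ^ Suc j / fact (Suc j)) has_real_derivative (real (Suc j) * x ^ j / fact (Suc j))) (at x within {0..s})"
      using DERIV_cdivide[OF DERIV_pow[of "Suc j" x "{0..s}"], of "fact (Suc j)"] by simp
    moreover have "real (Suc j) * x ^ j / fact (Suc j) = x ^ j / fact j"
      by (simp add: fact_Suc divide_simps)
    ultimately show "((\<lambda>r::real. r ^ Suc j / fact (Suc j)) has_vector_derivative (x ^ j / fact j)) (at x within {0..s})"
      by (simp add: has_real_derivative_iff_has_vector_derivative)
  qed
  then show ?thesis by simp
qed

lemma int_sub_le:
  fixes f :: "real \<Rightarrow> real"
  assumes "f integrable_on {a..b}" "a \<le> c" "c \<le> b" "\<And>x. x \<in> {a..c} \<Longrightarrow> 0 \<le> f x"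
  shows "integral {c..b} f \<le> integral {a..b} f"
proof -
  have "integral {a..c} f + integral {c..b} f = integral {a..b} f"
    using Henstock_Kurzweil_Integration.integral_combine[where a=a and c=c and b=b and f=f] assms by auto
  moreover have "0 \<le> integral {a..c} f"
    by (rule integral_nonneg) (use assms integrable_on_subinterval[OF assms(1)] in auto)
  ultimately show ?thesis by linarith
qed

lemma bs_le_pow: "0 \<le> s \<Longrightarrow> bspline j s \<le> s ^ j / fact j"
proof (induction j arbitrary: s)
  case 0 then show ?case by (simp add: indicator_def)
next
  case (Suc j)
  let ?p = "\<lambda>r::real. r ^ j / fact j"
  have Bi: "bspline j integrable_on {a..b}" for a b :: real by (rule LI_D[OF bs_LI])
  have pi: "?p integrable_on {a..b}" for a b
    by (intro integrable_continuous_real continuous_intros) simp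
  have key: "integral {a..s} (bspline j) \<le> s ^ Suc j / fact (Suc j)" if "0 \<le> a" "a \<le> s" for a
  proof -
    have "integral {a..s} (bspline j) \<le> integral {a..s} ?p"
      by (rule integral_le[OF Bi pi]) (use Suc.IH that in auto)
    also have "\<dots> \<le> integral {0..s} ?p"
      by (rule int_sub_le[OF pi]) (use that in auto)
    also have "\<dots> = s ^ Suc j / fact (Suc j)"
      using pow_has_integral[OF Suc.prems] by (rule integral_unique)
    finally show ?thesis .
  qed
  show ?case
  proof (cases "1 \<le> s")
    case True
    then show ?thesis using key[of "s-1"] by simp
  next
    case False
    have "integral {s-1..0} (bspline j) + integral {0..s} (bspline j) = integral {s-1..s} (bspline j)"
      using Henstock_Kurzweil_Integration.integral_combine[where a="s-1" and c=0 and b=s and f="bspline j"] Bi False Suc.prems by auto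
    moreover have "integral {s-1..0} (bspline j) = integral {s-1..0} (\<lambda>_. 0)"
      by (rule integral_spike[where S="{0}"]) (auto simp: bs_neg)
    ultimately have "bspline (Suc j) s = integral {0..s} (bspline j)" by simp
    then show ?thesis using key[of 0] Suc.prems by simp
  qed
qed



definition V :: "real \<Rightarrow> real" where
  "V x = (\<Sum>j<nat \<lfloor>x\<rfloor> + 1. bspline j (x - real j))"

lemma sum_ext_zero:
  assumes "real N > x"
  shows "(\<Sum>j<N + d. bspline j (x - real j)) = (\<Sum>j<N. bspline j (x - real j))"
proof (induction d)
  case 0 then show ?case by simp
next
  case (Suc d)
  have "bspline (N + d) (x - real (N + d)) = 0" by (rule bs_neg) (use assms in simp)
  then show ?case using Suc by simp
qed

lemma V_sum:
  assumes "real N > x"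
  shows "V x = (\<Sum>j<N. bspline j (x - real j))"
proof -
  define K where "K = nat \<lfloor>x\<rfloor> + 1"
  have K: "real K > x" unfolding K_def by linarith
  have VK: "V x = (\<Sum>j<K. bspline j (x - real j))" unfolding V_def K_def ..
  show ?thesis
  proof (cases "K \<le> N")
    case True
    then show ?thesis using sum_ext_zero[OF K, of "N - K"] VK by simp
  next
    case False
    then show ?thesis using sum_ext_zero[OF assms, of "K - N"] VK by simp
  qed
qed

lemma bs_Suc_nonpos:
  assumes "s \<le> 0" shows "bspline (Suc m) s = 0"
proof -
  have "integral {s-1..s} (bspline m) = integral {s-1..s} (\<lambda>_. 0)"
    by (rule integral_spike[where S="{0}"]) (use assms in \<open>auto simp: bs_neg\<close>)
  then show ?thesis by simp
qed

lemma V_neg: "x < 0 \<Longrightarrow> V x = 0"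
  using V_sum[of x 0] by simp

lemma V_01: "0 \<le> x \<Longrightarrow> x \<le> 1 \<Longrightarrow> V x = 1"
  using V_sum[of x 2] bs_Suc_nonpos[of "x - 1" 0] by (simp add: numeral_2_eq_2)

lemma V_nonneg: "0 \<le> V x"
  unfolding V_def by (intro sum_nonneg) (simp add: bs_nonneg)

lemma shift_LI: "LI (\<lambda>y. bspline j (y - real j))"
proof (cases j)
  case 0 then show ?thesis using bs_LI[of 0] by (simp only: of_nat_0 diff_0_right)
next
  case (Suc m)
  show ?thesis
  proof (rule isCont_LI)
    fix x
    have "isCont (\<lambda>y. y - real j) x" by (intro continuous_intros)
    from isCont_o2[OF this bs_isCont[where m=m]] Suc
    show "isCont (\<lambda>y. bspline j (y - real j)) x" by simp
  qed
qed

lemma V_LI: "LI V"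
  unfolding LI_def
proof (intro allI)
  fix a b :: real
  define N where "N = nat \<lfloor>b\<rfloor> + 1"
  have N: "real N > b" unfolding N_def by linarith
  have "(\<lambda>y. \<Sum>j<N. bspline j (y - real j)) integrable_on {a..b}"
    by (intro integrable_sum LI_D[OF shift_LI]) simp
  then show "V integrable_on {a..b}"
    by (rule integrable_eq) (use N in \<open>auto intro!: V_sum[symmetric]\<close>)
qed

lemma V_eq:
  assumes "1 < x"
  shows "V x = integral {x-2..x-1} V"
proof -
  define M where "M = nat \<lfloor>x\<rfloor>"
  have M1: "real M > x - 1" "real (Suc M) > x" unfolding M_def by linarith+
  have "V x = (\<Sum>j<Suc M. bspline j (x - real j))" by (rule V_sum[OF M1(2)])
  also have "\<dots> = bspline 0 x + (\<Sum>j<M. bspline (Suc j) (x - real (Suc j)))"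
    by (subst sum.lessThan_Suc_shift) simp
  also have "bspline 0 x = 0" using assms by simp
  also have "(\<Sum>j<M. bspline (Suc j) (x - real (Suc j))) = (\<Sum>j<M. integral {x-2..x-1} (\<lambda>y. bspline j (y - real j)))"
  proof (rule sum.cong[OF refl])
    fix j assume "j \<in> {..<M}"
    have "bspline (Suc j) (x - real (Suc j)) = integral {x - real j - 2..x - real j - 1} (bspline j)"
      by (simp add: algebra_simps)
    also have "\<dots> = integral {(x - real j - 2) - (- real j)..(x - real j - 1) - (- real j)} (\<lambda>y. bspline j (y + (- real j)))"
      by (rule integral_shift_real_ivl[symmetric])
    also have "\<dots> = integral {x-2..x-1} (\<lambda>y. bspline j (y - real j))" by simp
    finally show "bspline (Suc j) (x - real (Suc j)) = integral {x-2..x-1} (\<lambda>y. bspline j (y - real j))" .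
  qed
  also have "\<dots> = integral {x-2..x-1} (\<lambda>y. \<Sum>j<M. bspline j (y - real j))"
    by (rule integral_sum[symmetric]) (auto intro: LI_D[OF shift_LI])
  also have "\<dots> = integral {x-2..x-1} V"
    by (rule integral_cong) (use M1 in \<open>auto intro!: V_sum[symmetric]\<close>)
  finally show ?thesis by simp
qed



definition REN :: "real \<Rightarrow> (real \<Rightarrow> real) \<Rightarrow> bool" where
  "REN a g \<longleftrightarrow> LI g \<and> (\<forall>x>a. g x = integral {x-2..x-1} g)"

lemma REN_prop:
  assumes R: "REN a g" and nn: "\<And>y. y \<in> {a-2..a} \<Longrightarrow> 0 \<le> g y"
  shows "\<And>y. a - 2 \<le> y \<Longrightarrow> 0 \<le> g y"
proof -
  have LI: "LI g" and eq: "\<And>x. x > a \<Longrightarrow> g x = integral {x-2..x-1} g" using R by (auto simp: REN_def)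
  have I: "\<forall>y\<in>{a-2..a + real n}. 0 \<le> g y" for n
  proof (induction n)
    case 0 then show ?case using nn by simp
  next
    case (Suc n)
    show ?case
    proof
      fix y assume y: "y \<in> {a-2..a + real (Suc n)}"
      show "0 \<le> g y"
      proof (cases "y \<le> a + real n")
        case True then show ?thesis using Suc y by auto
      next
        case False
        then have "y > a" by simp
        then have "g y = integral {y-2..y-1} g" by (rule eq)
        also have "0 \<le> \<dots>"
          by (rule integral_nonneg[OF LI_D[OF LI]]) (use Suc y False in auto)
        finally show ?thesis .
      qed
    qed
  qed
  fix y assume "a - 2 \<le> y"
  moreover have "y \<le> a + real (nat \<lceil>y - a\<rceil>)" by linarith
  ultimately show "0 \<le> g y" using I[of "nat \<lceil>y - a\<rceil>"] by auto
qed

lemma int_sub_le2: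
  fixes f :: "real \<Rightarrow> real"
  assumes "LI f" "u \<le> p" "p \<le> q" "q \<le> v" "\<And>x. x \<in> {u..v} \<Longrightarrow> 0 \<le> f x"
  shows "integral {p..q} f \<le> integral {u..v} f"
proof -
  have "integral {p..q} f + integral {q..v} f = integral {p..v} f"
    using Henstock_Kurzweil_Integration.integral_combine[where a=p and c=q and b=v and f=f] assms LI_D by auto
  moreover have "0 \<le> integral {q..v} f"
    by (rule integral_nonneg[OF LI_D[OF assms(1)]]) (use assms in auto)
  moreover have "integral {p..v} f \<le> integral {u..v} f"
    by (rule int_sub_le[OF LI_D[OF assms(1)]]) (use assms in auto)
  ultimately show ?thesis by linarith
qed

lemma int_lb:
  fixes f :: "real \<Rightarrow> real"
  assumes "LI f" "u \<le> p" "p \<le> q" "q \<le> v" "\<And>x. x \<in> {u..v} \<Longrightarrow> 0 \<le> f x"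
    "\<And>x. x \<in> {p..q} \<Longrightarrow> c \<le> f x"
  shows "c * (q - p) \<le> integral {u..v} f"
proof -
  have "integral {p..q} (\<lambda>_. c) \<le> integral {p..q} f"
    by (rule integral_le[OF _ LI_D[OF assms(1)]]) (use assms in auto)
  moreover have "integral {p..q} (\<lambda>_. c) = c * (q - p)" using assms by simp
  ultimately show ?thesis using int_sub_le2[OF assms(1-5)] by linarith
qed

lemma REN_growth:
  assumes R: "REN a g" and nn: "\<And>y. a - 2 \<le> y \<Longrightarrow> 0 \<le> g y"
    and c: "0 \<le> c" and lb: "\<And>y. y \<in> {p..q} \<Longrightarrow> c \<le> g y"
    and p: "a - 2 \<le> p" "a \<le> p + 1" and h: "0 < h" "h \<le> q - p" "h \<le> 1"
    and y: "y \<in> {p+1+h..q+2-h}"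
  shows "c * h \<le> g y"
proof -
  have LI: "LI g" and eq: "\<And>x. x > a \<Longrightarrow> g x = integral {x-2..x-1} g" using R by (auto simp: REN_def)
  define p' where "p' = max (y-2) p"
  define q' where "q' = min (y-1) q"
  have hq: "h \<le> q' - p'" using y h unfolding p'_def q'_def by auto
  have "c * (q' - p') \<le> integral {y-2..y-1} g"
    by (rule int_lb[OF LI]) (use hq y p h in \<open>auto simp: p'_def q'_def intro!: nn lb\<close>)
  also have "\<dots> = g y" using y p h by (intro eq[symmetric]) auto
  finally show ?thesis using hq c by (meson mult_left_mono order_trans)
qed



lemma REN_doeblin:
  assumes R: "REN a g" and nn0: "\<And>y. y \<in> {a-2..a} \<Longrightarrow> 0 \<le> g y"
    and y: "y \<in> {a+4..a+6}"
  shows "integral {a-3/2..a-1/2} g / 1024 \<le> g y"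
proof -
  have LI: "LI g" and eq: "\<And>x. x > a \<Longrightarrow> g x = integral {x-2..x-1} g" using R by (auto simp: REN_def)
  have nn: "\<And>y. a - 2 \<le> y \<Longrightarrow> 0 \<le> g y" by (rule REN_prop[OF R nn0])
  define P where "P = integral {a-3/2..a-1} g"
  define Q where "Q = integral {a-1..a-1/2} g"
  have P0: "0 \<le> P" unfolding P_def by (rule integral_nonneg[OF LI_D[OF LI]]) (auto intro!: nn)
  have Q0: "0 \<le> Q" unfolding Q_def by (rule integral_nonneg[OF LI_D[OF LI]]) (auto intro!: nn)
  have PQ: "P + Q = integral {a-3/2..a-1/2} g"
    unfolding P_def Q_def
    using Henstock_Kurzweil_Integration.integral_combine[where a="a-3/2" and c="a-1" and b="a-1/2" and f=g] LI_D[OF LI] by auto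
  have A0: "P \<le> g y" if "y \<in> {a+1/4..a+1/2}" for y
  proof -
    have "P \<le> integral {y-2..y-1} g" unfolding P_def
      by (rule int_sub_le2[OF LI]) (use that in \<open>auto intro!: nn\<close>)
    also have "\<dots> = g y" using that by (intro eq[symmetric]) auto
    finally show ?thesis .
  qed
  have B0: "Q \<le> g y" if "y \<in> {a+1/2..a+1}" for y
  proof -
    have "Q \<le> integral {y-2..y-1} g" unfolding Q_def
      by (rule int_sub_le2[OF LI]) (use that in \<open>auto intro!: nn\<close>)
    also have "\<dots> = g y" using that by (intro eq[symmetric]) auto
    finally show ?thesis .
  qed
  have A1: "P/8 \<le> g y" if "y \<in> {a+11/8..a+19/8}" for y
    using REN_growth[OF R nn, where c=P and p="a+1/4" and q="a+1/2" and h="1/8" and y=y] A0 P0 that by auto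
  have A2: "P/64 \<le> g y" if "y \<in> {a+5/2..a+17/4}" for y
    using REN_growth[OF R nn, where c="P/8" and p="a+11/8" and q="a+19/8" and h="1/8" and y=y] A1 P0 that by auto
  have A3: "P/512 \<le> g y" if "y \<in> {a+29/8..a+49/8}" for y
    using REN_growth[OF R nn, where c="P/64" and p="a+5/2" and q="a+17/4" and h="1/8" and y=y] A2 P0 that by auto
  have B1: "Q/8 \<le> g y" if "y \<in> {a+13/8..a+23/8}" for y
    using REN_growth[OF R nn, where c=Q and p="a+1/2" and q="a+1" and h="1/8" and y=y] B0 Q0 that by auto
  have B2: "Q/64 \<le> g y" if "y \<in> {a+11/4..a+19/4}" for y
    using REN_growth[OF R nn, where c="Q/8" and p="a+13/8" and q="a+23/8" and h="1/8" and y=y] B1 Q0 that by auto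
  have B3: "Q/512 \<le> g y" if "y \<in> {a+31/8..a+53/8}" for y
    using REN_growth[OF R nn, where c="Q/64" and p="a+11/4" and q="a+19/4" and h="1/8" and y=y] B2 Q0 that by auto
  have "P/512 \<le> g y" "Q/512 \<le> g y" using A3 B3 y by auto
  then show ?thesis using PQ by linarith
qed



lemma REN_V:
  assumes "1 \<le> a"
  shows "REN a (\<lambda>y. \<alpha> * V y + \<beta>)"
  unfolding REN_def
proof (intro conjI allI impI)
  have Vi: "V integrable_on {a..b}" for a b by (rule LI_D[OF V_LI])
  have Vm: "(\<lambda>x. \<alpha> * V x) integrable_on {a..b}" for a b using integrable_cmul[OF Vi, of \<alpha>] by simp
  show "LI (\<lambda>y. \<alpha> * V y + \<beta>)" unfolding LI_def
    using Vm by (auto intro!: integrable_add)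
  fix x assume "a < x"
  then have "V x = integral {x-2..x-1} V" using assms by (intro V_eq) auto
  moreover have "integral {x-2..x-1} (\<lambda>y. \<alpha> * V y + \<beta>) = \<alpha> * integral {x-2..x-1} V + \<beta>"
    using Vi Vm by (subst integral_add) auto
  ultimately show "\<alpha> * V x + \<beta> = integral {x - 2..x - 1} (\<lambda>y. \<alpha> * V y + \<beta>)" by simp
qed

lemma V_le1: "V x \<le> 1"
proof -
  have "0 \<le> (-1) * V y + 1" if "y \<in> {1-2..1}" for y
    using that V_neg[of y] V_01[of y] by (cases "y < 0") auto
  from REN_prop[OF REN_V[of 1 "-1" 1] this]
  show ?thesis by (cases "x < -1") (auto simp: V_neg)
qed

lemma iterate:
  "\<exists>lo hi. hi - lo \<le> (1023/1024) ^ k \<and> (\<forall>y. 6 * real k \<le> y \<longrightarrow> lo \<le> V y \<and> V y \<le> hi)"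
proof (induction k)
  case 0
  show ?case by (rule exI[of _ 0], rule exI[of _ 1]) (auto simp: V_nonneg V_le1)
next
  case (Suc k)
  then obtain lo hi where d: "hi - lo \<le> (1023/1024) ^ k"
    and b: "\<And>y. 6 * real k \<le> y \<Longrightarrow> lo \<le> V y \<and> V y \<le> hi" by blast
  define a where "a = 6 * real k + 2"
  define A where "A = integral {a-3/2..a-1/2} V"
  have Vi: "V integrable_on {a..b}" for a b by (rule LI_D[OF V_LI])
  have a1: "1 \<le> a" unfolding a_def by simp
  have I1: "integral {a-3/2..a-1/2} (\<lambda>y. 1 * V y + - lo) = A - lo"
    unfolding A_def using Vi by (subst integral_add) auto
  have I2: "integral {a-3/2..a-1/2} (\<lambda>y. (-1) * V y + hi) = hi - A"
    unfolding A_def using Vi by (subst integral_add) (auto intro!: integrable_neg)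
  define lo' where "lo' = lo + (A - lo) / 1024"
  define hi' where "hi' = hi - (hi - A) / 1024"
  have w1: "lo' \<le> V y" if "y \<in> {a+4..a+6}" for y
  proof -
    have "integral {a-3/2..a-1/2} (\<lambda>y. 1 * V y + - lo) / 1024 \<le> 1 * V y + - lo"
    proof (rule REN_doeblin[OF REN_V[OF a1] _ that])
      fix z assume "z \<in> {a-2..a}"
      then have "6 * real k \<le> z" unfolding a_def by simp
      then show "0 \<le> 1 * V z + - lo" using b by simp
    qed
    then have "(A - lo) / 1024 \<le> V y - lo" using I1 by simp
    then show ?thesis unfolding lo'_def by linarith
  qed
  have w2: "V y \<le> hi'" if "y \<in> {a+4..a+6}" for y
  proof -
    have "integral {a-3/2..a-1/2} (\<lambda>y. (-1) * V y + hi) / 1024 \<le> (-1) * V y + hi"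
    proof (rule REN_doeblin[OF REN_V[OF a1] _ that])
      fix z assume "z \<in> {a-2..a}"
      then have "6 * real k \<le> z" unfolding a_def by simp
      then show "0 \<le> (-1) * V z + hi" using b by simp
    qed
    then have "(hi - A) / 1024 \<le> hi - V y" using I2 by simp
    then show ?thesis unfolding hi'_def by linarith
  qed
  have a6: "1 \<le> a + 6" using a1 by simp
  have p1: "0 \<le> 1 * V y + - lo'" if "a + 6 - 2 \<le> y" for y
  proof (rule REN_prop[OF REN_V[OF a6] _ that])
    fix z assume "z \<in> {a+6-2..a+6}"
    then have "z \<in> {a+4..a+6}" by simp
    then show "0 \<le> 1 * V z + - lo'" using w1 by simp
  qed
  have p2: "0 \<le> (-1) * V y + hi'" if "a + 6 - 2 \<le> y" for y
  proof (rule REN_prop[OF REN_V[OF a6] _ that])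
    fix z assume "z \<in> {a+6-2..a+6}"
    then have "z \<in> {a+4..a+6}" by simp
    then show "0 \<le> (-1) * V z + hi'" using w2 by simp
  qed
  have "hi' - lo' = (hi - lo) * (1023/1024)" unfolding hi'_def lo'_def by (simp add: field_simps)
  also have "\<dots> \<le> (1023/1024) ^ k * (1023/1024)" using d by (intro mult_right_mono) auto
  also have "\<dots> = (1023/1024) ^ Suc k" by simp
  finally have dd: "hi' - lo' \<le> (1023/1024) ^ Suc k" .
  have bb: "lo' \<le> V y \<and> V y \<le> hi'" if "6 * real (Suc k) \<le> y" for y
  proof -
    have "a + 6 - 2 \<le> y" using that unfolding a_def by simp
    then show ?thesis using p1[of y] p2[of y] by simp
  qed
  show ?case using dd bb by blast
qed



lemma V_yLI: "LI (\<lambda>y. y * V y)"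
  unfolding LI_def
proof (intro allI)
  fix a b :: real
  have "(\<lambda>y. y * V y) absolutely_integrable_on {a..b}"
  proof (rule absolutely_integrable_bounded_measurable_product_real)
    show "(\<lambda>y::real. y) \<in> borel_measurable (lebesgue_on {a..b})"
      by (rule continuous_imp_measurable_on_sets_lebesgue) (auto intro: continuous_intros)
    show "{a..b} \<in> sets lebesgue" by simp
    show "bounded ((\<lambda>y::real. y) ` {a..b})" by simp
    show "V absolutely_integrable_on {a..b}"
      by (rule nonnegative_absolutely_integrable_1[OF LI_D[OF V_LI]]) (simp add: V_nonneg)
  qed
  then show "(\<lambda>y. y * V y) integrable_on {a..b}" unfolding absolutely_integrable_on_def by blast
qed

lemma V_isCont:
  assumes "x \<noteq> 0" "x \<noteq> 1"
  shows "isCont V x"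
proof -
  consider "x < 0" | "0 < x \<and> x < 1" | "1 < x" using assms by linarith
  then show ?thesis
  proof cases
    case 1
    have "eventually (\<lambda>y. V y = 0) (nhds x)"
      unfolding eventually_nhds by (rule exI[of _ "{..<0}"]) (use 1 in \<open>auto simp: V_neg\<close>)
    from isCont_cong[OF this] show ?thesis by simp
  next
    case 2
    have "eventually (\<lambda>y. V y = 1) (nhds x)"
      unfolding eventually_nhds by (rule exI[of _ "{0<..<1}"]) (use 2 in \<open>auto simp: V_01\<close>)
    from isCont_cong[OF this] show ?thesis by simp
  next
    case 3
    have ev: "eventually (\<lambda>y. V y = integral {y-2..y-1} V) (nhds x)"
      unfolding eventually_nhds by (rule exI[of _ "{1<..}"]) (use 3 in \<open>auto simp: V_eq\<close>)
    have "isCont (\<lambda>y. integral {y-2..y-1} V) x" by (rule win_isCont[OF V_LI]) simp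
    then show ?thesis using isCont_cong[OF ev] by simp
  qed
qed

lemma ind_deriv:
  assumes "LI f" "isCont f u" "c < u"
  shows "((\<lambda>v. integral {c..v} f) has_real_derivative f u) (at u)"
proof -
  have "((\<lambda>v. integral {c..v} f) has_vector_derivative f u) (at u within ({c..u+1} - {}))"
    by (rule integral_has_vector_derivative_continuous_at[OF LI_D[OF assms(1)]])
       (use assms in \<open>auto intro: continuous_at_imp_continuous_within\<close>)
  moreover have "at u within ({c..u+1} - {}) = at u"
    by (rule at_within_interior) (use assms in auto)
  ultimately show ?thesis by (simp add: has_real_derivative_iff_has_vector_derivative)
qed



definition GG :: "real \<Rightarrow> real" where "GG u = integral {-3..u} V"
definition HH :: "real \<Rightarrow> real" where "HH u = integral {-3..u} (\<lambda>y. y * V y)"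
definition Phi :: "real \<Rightarrow> real" where
  "Phi X = GG X - GG (X-1) + HH (X-1) - HH (X-2) - (X-2) * (GG (X-1) - GG (X-2))"

lemma LI_diff_ind:
  assumes "LI f" "c \<le> a" "a \<le> b"
  shows "integral {c..b} f - integral {c..a} f = integral {a..b} f"
  using Henstock_Kurzweil_Integration.integral_combine[where a=c and c=a and b=b and f=f] assms LI_D
  by fastforce

lemma GG_diff: "-3 \<le> a \<Longrightarrow> a \<le> b \<Longrightarrow> GG b - GG a = integral {a..b} V"
  unfolding GG_def by (rule LI_diff_ind[OF V_LI])

lemma HH_diff: "-3 \<le> a \<Longrightarrow> a \<le> b \<Longrightarrow> HH b - HH a = integral {a..b} (\<lambda>y. y * V y)"
  unfolding HH_def by (rule LI_diff_ind[OF V_yLI])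

lemma GG_chain:
  assumes "(g has_real_derivative g') (at x)" "isCont V (g x)" "-3 < g x"
  shows "((\<lambda>x. GG (g x)) has_real_derivative V (g x) * g') (at x)"
  unfolding GG_def by (rule DERIV_chain2[OF ind_deriv[OF V_LI assms(2,3)] assms(1)])

lemma HH_chain:
  assumes "(g has_real_derivative g') (at x)" "isCont V (g x)" "-3 < g x"
  shows "((\<lambda>x. HH (g x)) has_real_derivative (g x * V (g x)) * g') (at x)"
proof -
  have "isCont (\<lambda>y. y * V y) (g x)" using assms(2) by (intro continuous_intros)
  then show ?thesis
    unfolding HH_def by (rule DERIV_chain2[OF ind_deriv[OF V_yLI _ assms(3)] assms(1)])
qed

lemma Phi_deriv:
  assumes "1 < X" "X \<noteq> 2" "X \<noteq> 3"
  shows "(Phi has_real_derivative 0) (at X)"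
proof -
  have c0: "isCont V X" "isCont V (X-1)" "isCont V (X-2)" using assms by (auto intro!: V_isCont)
  have i0: "((\<lambda>X. X) has_real_derivative 1) (at X)" by (rule DERIV_ident)
  have i1: "((\<lambda>X. X - 1) has_real_derivative 1) (at X)" by (auto intro!: derivative_eq_intros)
  have i2: "((\<lambda>X. X - 2) has_real_derivative 1) (at X)" by (auto intro!: derivative_eq_intros)
  have a1: "((\<lambda>X. GG X) has_real_derivative V X * 1) (at X)" using GG_chain[OF i0] c0 assms by simp
  have a2: "((\<lambda>X. GG (X-1)) has_real_derivative V (X-1) * 1) (at X)" using GG_chain[OF i1] c0 assms by simp
  have a3: "((\<lambda>X. GG (X-2)) has_real_derivative V (X-2) * 1) (at X)" using GG_chain[OF i2] c0 assms by simp
  have b2: "((\<lambda>X. HH (X-1)) has_real_derivative ((X-1) * V (X-1)) * 1) (at X)" using HH_chain[OF i1] c0 assms by simp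
  have b3: "((\<lambda>X. HH (X-2)) has_real_derivative ((X-2) * V (X-2)) * 1) (at X)" using HH_chain[OF i2] c0 assms by simp
  have d: "((\<lambda>X. GG (X-1) - GG (X-2)) has_real_derivative (V (X-1) * 1 - V (X-2) * 1)) (at X)"
    by (rule DERIV_diff[OF a2 a3])
  have e: "((\<lambda>X. (X-2) * (GG (X-1) - GG (X-2))) has_real_derivative
      ((X-2) * (V (X-1) * 1 - V (X-2) * 1) + 1 * (GG (X-1) - GG (X-2)))) (at X)"
    by (rule DERIV_mult'[OF i2 d])
  have f: "((\<lambda>X. GG X - GG (X-1) + HH (X-1) - HH (X-2)) has_real_derivative
      (V X * 1 - V (X-1) * 1 + ((X-1) * V (X-1)) * 1 - ((X-2) * V (X-2)) * 1)) (at X)"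
    by (rule DERIV_diff[OF DERIV_add[OF DERIV_diff[OF a1 a2] b2] b3])
  have g: "(Phi has_real_derivative
      (V X * 1 - V (X-1) * 1 + ((X-1) * V (X-1)) * 1 - ((X-2) * V (X-2)) * 1)
      - ((X-2) * (V (X-1) * 1 - V (X-2) * 1) + 1 * (GG (X-1) - GG (X-2)))) (at X)"
    unfolding Phi_def[abs_def] by (rule DERIV_diff[OF f e])
  have "GG (X-1) - GG (X-2) = integral {X-2..X-1} V" using assms by (intro GG_diff) auto
  also have "\<dots> = V X" using assms by (intro V_eq[symmetric]) auto
  finally have "(V X * 1 - V (X-1) * 1 + ((X-1) * V (X-1)) * 1 - ((X-2) * V (X-2)) * 1)
      - ((X-2) * (V (X-1) * 1 - V (X-2) * 1) + 1 * (GG (X-1) - GG (X-2))) = 0"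
    by (simp add: algebra_simps)
  with g show ?thesis by simp
qed

lemma Phi_isCont: "0 \<le> X \<Longrightarrow> isCont Phi X"
  unfolding Phi_def[abs_def] GG_def HH_def
  by (intro continuous_intros isCont_o2[OF _ ind_isCont[OF V_LI]] isCont_o2[OF _ ind_isCont[OF V_yLI]]
         ind_isCont[OF V_LI]) auto

lemma Phi_1: "Phi 1 = 1"
proof -
  have "GG 1 - GG 0 = integral {0..1} V" by (rule GG_diff) auto
  also have "\<dots> = integral {0..1::real} (\<lambda>_. 1::real)" by (rule Henstock_Kurzweil_Integration.integral_cong) (simp add: V_01)
  finally have 1: "GG 1 - GG 0 = 1" by simp
  have "GG 0 - GG (-1) = integral {-1..0} V" by (rule GG_diff) auto
  also have "\<dots> = integral {-1..0::real} (\<lambda>_. 0::real)"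
    by (rule integral_spike[where S="{0}"]) (auto simp: V_neg)
  finally have 2: "GG 0 - GG (-1) = 0" by simp
  have "HH 0 - HH (-1) = integral {-1..0} (\<lambda>y. y * V y)" by (rule HH_diff) auto
  also have "\<dots> = integral {-1..0::real} (\<lambda>_. 0::real)"
    by (rule Henstock_Kurzweil_Integration.integral_cong) (metis V_neg atLeastAtMost_iff mult_eq_0_iff order_less_le)
  finally have 3: "HH 0 - HH (-1) = 0" by simp
  show ?thesis unfolding Phi_def using 1 2 3 by simp
qed



lemma Phi_const:
  assumes "1 \<le> X" shows "Phi X = 1"
proof -
  have cont: "continuous_on {1..X} Phi"
  proof (rule continuous_at_imp_continuous_on, rule ballI)
    fix x assume "x \<in> {1..X}"
    then have "0 \<le> x" by simp
    then show "isCont Phi x" by (rule Phi_isCont)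
  qed
  have der: "(Phi has_derivative (\<lambda>h. 0)) (at x within {1..X})" if x: "x \<in> {1..X} - {1,2,3}" for x
  proof -
    have "1 < x" "x \<noteq> 2" "x \<noteq> 3" using x by auto
    then have "(Phi has_real_derivative 0) (at x)" by (rule Phi_deriv)
    then have "(Phi has_real_derivative 0) (at x within {1..X})" by (rule has_field_derivative_at_within)
    then have "(Phi has_derivative (*) 0) (at x within {1..X})" by (rule has_field_derivative_imp_has_derivative)
    moreover have "((*) (0::real)) = (\<lambda>h. 0)" by (rule ext) simp
    ultimately show ?thesis by simp
  qed
  have fin: "finite {1::real,2,3}" by simp
  have XX: "X \<in> {1..X}" using assms by simp
  show ?thesis
    by (rule has_derivative_zero_unique_strong_interval[OF fin cont Phi_1 der XX])
qed

lemma Phi_alt: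
  assumes "1 \<le> X"
  shows "Phi X = integral {X-1..X} V + integral {X-2..X-1} (\<lambda>y. (y - (X-2)) * V y)"
proof -
  have Vi: "V integrable_on {X-2..X-1}" by (rule LI_D[OF V_LI])
  have Vmi: "(\<lambda>y. (X-2) * V y) integrable_on {X-2..X-1}" using integrable_cmul[OF Vi, of "X-2"] by simp
  have yVi: "(\<lambda>y. y * V y) integrable_on {X-2..X-1}" by (rule LI_D[OF V_yLI])
  have "integral {X-2..X-1} (\<lambda>y. (y - (X-2)) * V y) = integral {X-2..X-1} (\<lambda>y. y * V y - (X-2) * V y)"
    by (rule Henstock_Kurzweil_Integration.integral_cong) (simp add: algebra_simps)
  also have "\<dots> = integral {X-2..X-1} (\<lambda>y. y * V y) - (X-2) * integral {X-2..X-1} V"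
    using integral_diff[OF yVi Vmi] integral_mult[OF Vi, of "X-2", symmetric] by (simp only:)
  finally have e: "integral {X-2..X-1} (\<lambda>y. (y - (X-2)) * V y) = integral {X-2..X-1} (\<lambda>y. y * V y) - (X-2) * integral {X-2..X-1} V" .
  have g1: "GG X - GG (X-1) = integral {X-1..X} V" by (rule GG_diff) (use assms in auto)
  have g2: "GG (X-1) - GG (X-2) = integral {X-2..X-1} V" by (rule GG_diff) (use assms in auto)
  have h2: "HH (X-1) - HH (X-2) = integral {X-2..X-1} (\<lambda>y. y * V y)" by (rule HH_diff) (use assms in auto)
  have "Phi X = (GG X - GG (X-1)) + (HH (X-1) - HH (X-2)) - (X-2) * (GG (X-1) - GG (X-2))"
    unfolding Phi_def by simp
  then show ?thesis unfolding e g1 g2 h2 by simp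
qed

lemma lin_int:
  fixes c d lo :: real
  assumes "d = c + 1"
  shows "integral {c..d} (\<lambda>y. (y - c) * lo) = lo / 2"
proof -
  have "((\<lambda>y. (y - c) * lo) has_integral ((d - c)^2 / 2 * lo - (c - c)^2 / 2 * lo)) {c..d}"
  proof (rule fundamental_theorem_of_calculus)
    show "c \<le> d" using assms by simp
    fix x assume "x \<in> {c..d}"
    have "((\<lambda>y. (y - c)^2 / 2 * lo) has_real_derivative ((x - c) * lo)) (at x within {c..d})"
      by (auto intro!: derivative_eq_intros simp: field_simps)
    then show "((\<lambda>y. (y - c)^2 / 2 * lo) has_vector_derivative ((x - c) * lo)) (at x within {c..d})"
      by (simp add: has_real_derivative_iff_has_vector_derivative)
  qed
  then have "((\<lambda>y. (y - c) * lo) has_integral lo / 2) {c..d}" using assms by simp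
  then show ?thesis by (rule integral_unique)
qed

lemma two_thirds_between:
  assumes X: "1 \<le> X" and b: "\<And>y. y \<in> {X-2..X} \<Longrightarrow> lo \<le> V y \<and> V y \<le> hi"
  shows "lo \<le> 2/3 \<and> 2/3 \<le> hi"
proof -
  have Vi: "V integrable_on {a..b}" for a b by (rule LI_D[OF V_LI])
  have wVi: "(\<lambda>y. (y - (X-2)) * V y) integrable_on {X-2..X-1}"
  proof -
    have "(\<lambda>y. y * V y - (X-2) * V y) integrable_on {X-2..X-1}"
      using integrable_diff[OF LI_D[OF V_yLI] integrable_cmul[OF Vi, of "X-2"]] by simp
    then show ?thesis by (rule integrable_eq) (simp add: algebra_simps)
  qed
  have ci: "(\<lambda>y. (y - (X-2)) * c) integrable_on {X-2..X-1}" for c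
    by (intro integrable_continuous_real continuous_intros)
  have "integral {X-1..X} (\<lambda>_. lo) \<le> integral {X-1..X} V"
  proof (rule integral_le[OF integrable_const_ivl Vi])
    fix y assume "y \<in> {X-1..X}" then show "lo \<le> V y" using b by simp
  qed
  moreover have "integral {X-1..X} V \<le> integral {X-1..X} (\<lambda>_. hi)"
  proof (rule integral_le[OF Vi integrable_const_ivl])
    fix y assume "y \<in> {X-1..X}" then show "V y \<le> hi" using b by simp
  qed
  moreover have "integral {X-2..X-1} (\<lambda>y. (y - (X-2)) * lo) \<le> integral {X-2..X-1} (\<lambda>y. (y - (X-2)) * V y)"
  proof (rule integral_le[OF ci wVi])
    fix y assume y: "y \<in> {X-2..X-1}"
    then have "lo \<le> V y" using b by simp
    moreover have "0 \<le> y - (X-2)" using y by simp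
    ultimately show "(y - (X-2)) * lo \<le> (y - (X-2)) * V y" by (rule mult_left_mono)
  qed
  moreover have "integral {X-2..X-1} (\<lambda>y. (y - (X-2)) * V y) \<le> integral {X-2..X-1} (\<lambda>y. (y - (X-2)) * hi)"
  proof (rule integral_le[OF wVi ci])
    fix y assume y: "y \<in> {X-2..X-1}"
    then have "V y \<le> hi" using b by simp
    moreover have "0 \<le> y - (X-2)" using y by simp
    ultimately show "(y - (X-2)) * V y \<le> (y - (X-2)) * hi" by (rule mult_left_mono)
  qed
  moreover have "integral {X-2..X-1} (\<lambda>y. (y - (X-2)) * lo) = lo/2" "integral {X-2..X-1} (\<lambda>y. (y - (X-2)) * hi) = hi/2"
    by (rule lin_int, simp)+
  moreover have "Phi X = 1" by (rule Phi_const[OF X])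
  moreover have "integral {X-1..X} (\<lambda>_. lo) = lo" "integral {X-1..X} (\<lambda>_. hi) = hi" by simp_all
  ultimately show ?thesis using Phi_alt[OF X] by linarith
qed

lemma V_lim: "(V \<longlongrightarrow> 2/3) at_top"
proof (rule tendstoI)
  fix e :: real assume e: "0 < e"
  obtain k where k: "(1023/1024::real) ^ k < e" using real_arch_pow_inv[OF e, of "1023/1024"] by auto
  obtain lo hi where d: "hi - lo \<le> (1023/1024) ^ k"
    and b: "\<And>y. 6 * real k \<le> y \<Longrightarrow> lo \<le> V y \<and> V y \<le> hi" using iterate[of k] by blast
  have "lo \<le> 2/3 \<and> 2/3 \<le> hi"
    by (rule two_thirds_between[of "6 * real k + 2"]) (auto intro!: b)
  then have "dist (V y) (2/3) < e" if "6 * real k \<le> y" for y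
  proof -
    have "lo \<le> V y" "V y \<le> hi" using b[OF that] by auto
    then have "V y - 2/3 < e" "2/3 - V y < e" using d k \<open>lo \<le> 2/3 \<and> 2/3 \<le> hi\<close> by linarith+
    then show ?thesis unfolding dist_real_def abs_less_iff by linarith
  qed
  then show "eventually (\<lambda>y. dist (V y) (2/3) < e) at_top"
    unfolding eventually_at_top_linorder by blast
qed



lemma sum_split_add: fixes f :: "nat \<Rightarrow> real" and N d :: nat shows "(\<Sum>j<N + d. f j) = (\<Sum>j<N. f j) + (\<Sum>i<d. f (N + i))"
  by (induction d) (auto simp: add_ac)

lemma pow_fact_lim: "(\<lambda>m. (t::real) ^ m / fact m) \<longlonglongrightarrow> 0"
proof -
  have "summable (\<lambda>m. t ^ m /\<^sub>R fact m)" by (rule summable_exp_generic)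
  then have "(\<lambda>m. t ^ m /\<^sub>R fact m) \<longlonglongrightarrow> 0" by (rule summable_LIMSEQ_zero)
  then show ?thesis by (simp add: divide_inverse_commute)
qed

theorem mainTheorem14:
  fixes t :: real
  assumes "t > 0"
  shows "(\<lambda>n. \<Sum>k=0..n. bspline (n - k) (real k + t)) \<longlonglongrightarrow> 2 / 3"
proof -
  define T where "T = nat \<lceil>t\<rceil>"
  define tail where "tail n = (\<Sum>i<T. bspline (Suc n + i) (t - 1 - real i))" for n
  have a_eq: "(\<Sum>k=0..n. bspline (n - k) (real k + t)) = V (real n + t) - tail n" for n
  proof -
    have "(\<Sum>k=0..n. bspline (n - k) (real k + t)) = (\<Sum>j=0..n. bspline (n - (n + 0 - j)) (real (n + 0 - j) + t))"
      by (rule sum.atLeastAtMost_rev)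
    also have "\<dots> = (\<Sum>j=0..n. bspline j (real n + t - real j))"
      by (rule sum.cong) (auto simp: of_nat_diff algebra_simps)
    also have "\<dots> = (\<Sum>j<Suc n. bspline j (real n + t - real j))"
      by (simp add: atLeast0AtMost lessThan_Suc_atMost)
    finally have 1: "(\<Sum>k=0..n. bspline (n - k) (real k + t)) = (\<Sum>j<Suc n. bspline j (real n + t - real j))" .
    have "real (Suc n + T) > real n + t" unfolding T_def by linarith
    then have "V (real n + t) = (\<Sum>j<Suc n + T. bspline j (real n + t - real j))" by (rule V_sum)
    also have "\<dots> = (\<Sum>j<Suc n. bspline j (real n + t - real j)) + tail n"
      unfolding sum_split_add tail_def by (simp add: algebra_simps)
    finally show ?thesis using 1 by simp
  qed
  have tail_lim: "tail \<longlonglongrightarrow> 0"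
    unfolding tail_def
  proof (rule tendsto_null_sum)
    fix i assume "i \<in> {..<T}"
    show "(\<lambda>n. bspline (Suc n + i) (t - 1 - real i)) \<longlonglongrightarrow> 0"
    proof (rule tendsto_sandwich[where f="\<lambda>_. 0" and h="\<lambda>n. t ^ (n + Suc i) / fact (n + Suc i)"])
      show "eventually (\<lambda>n. 0 \<le> bspline (Suc n + i) (t - 1 - real i)) sequentially"
        using bs_nonneg by (intro always_eventually) blast
      have "bspline (Suc n + i) (t - 1 - real i) \<le> t ^ (n + Suc i) / fact (n + Suc i)" for n
      proof (cases "t - 1 - real i < 0")
        case True
        have "bspline (Suc n + i) (t - 1 - real i) = 0" by (rule bs_neg) (use True in simp)
        moreover have "0 \<le> t ^ (n + Suc i) / fact (n + Suc i)" using assms by simp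
        ultimately show ?thesis by linarith
      next
        case False
        then have "bspline (n + Suc i) (t - 1 - real i) \<le> (t - 1 - real i) ^ (n + Suc i) / fact (n + Suc i)"
          by (intro bs_le_pow) simp
        then have "bspline (Suc n + i) (t - 1 - real i) \<le> (t - 1 - real i) ^ (n + Suc i) / fact (n + Suc i)"
          by (simp only: add_Suc add_Suc_right)
        also have "\<dots> \<le> t ^ (n + Suc i) / fact (n + Suc i)"
          using False by (intro divide_right_mono power_mono) auto
        finally show ?thesis .
      qed
      then show "eventually (\<lambda>n. bspline (Suc n + i) (t - 1 - real i) \<le> t ^ (n + Suc i) / fact (n + Suc i)) sequentially"
        by simp
      show "(\<lambda>n. 0::real) \<longlonglongrightarrow> 0" by simp
      show "(\<lambda>n. t ^ (n + Suc i) / fact (n + Suc i)) \<longlonglongrightarrow> 0"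
        using LIMSEQ_ignore_initial_segment[OF pow_fact_lim[of t], where k="Suc i"] by simp
    qed
  qed
  have lim_n: "filterlim (\<lambda>n. real n + t) at_top sequentially"
    using filterlim_tendsto_add_at_top[OF tendsto_const filterlim_real_sequentially, of t]
    by (simp add: add.commute)
  have "(\<lambda>n. V (real n + t)) \<longlonglongrightarrow> 2/3"
    by (rule filterlim_compose[OF V_lim lim_n])
  then have "(\<lambda>n. V (real n + t) - tail n) \<longlonglongrightarrow> 2/3 - 0"
    by (intro tendsto_diff tail_lim)
  then show ?thesis using a_eq by simp
qed


end
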